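(* For integers $n\geq 3$ and $m\geq 1$, $\chi_\rho(FSSD_m(S'(K_n))) = n+2$.
   Context: All graphs are finite and simple. For a positive integer $i$, an $i$-packing in a graph is a set of vertices any two distinct members of which are at distance greater than $i$. The packing chromatic number $\chi_\rho(H)$ is the smallest $k$ such that $V(H)$ can be partitioned into sets $V_1,\dots,V_k$ with each $V_i$ an $i$-packing. For a positive integer $m$, $FSSD_m(G)$ is obtained from $G$ by replacing each edge $xy$ by a copy of $K_{2,m}$: the edge $xy$ is deleted and $m$ new vertices are added, each adjacent to exactly $x$ and $y$. The splitting graph $S'(G)$ of a graph $G$ with vertices $w_1,\dots,w_n$ is obtained from $G$ by adding new vertices $w_1',\dots,w_n'$, where each $w_i'$ is joined to every neighbor of $w_i$ in $G$ (equivalently, the neighborhood corona $G\star K_1$). $K_n$ is the complete graph on $n$ vertices. *)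

theory Defs
  imports Main
begin

text \<open>A finite simple graph is represented as a pair (V, E) of a vertex set and a set of
  edges, each edge being a two-element set of vertices.\<close>

type_synonym 'a graph = "'a set \<times> 'a set set"

definition verts :: "'a graph \<Rightarrow> 'a set" where "verts G = fst G"
definition edges :: "'a graph \<Rightarrow> 'a set set" where "edges G = snd G"

definition adj :: "'a graph \<Rightarrow> 'a \<Rightarrow> 'a \<Rightarrow> bool" where
  "adj G u v \<longleftrightarrow> u \<noteq> v \<and> {u, v} \<in> edges G"

definition walk :: "'a graph \<Rightarrow> 'a list \<Rightarrow> bool" where
  "walk G xs \<longleftrightarrow> xs \<noteq> [] \<and> set xs \<subseteq> verts G \<and>
     (\<forall>i. Suc i < length xs \<longrightarrow> adj G (xs ! i) (xs ! Suc i))"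

text \<open>dist_le G k u v: the distance between u and v in G is at most k
  (there is a u-v walk with at most k edges).\<close>
definition dist_le :: "'a graph \<Rightarrow> nat \<Rightarrow> 'a \<Rightarrow> 'a \<Rightarrow> bool" where
  "dist_le G k u v \<longleftrightarrow> (\<exists>xs. walk G xs \<and> hd xs = u \<and> last xs = v \<and> length xs \<le> Suc k)"

definition packing :: "'a graph \<Rightarrow> nat \<Rightarrow> 'a set \<Rightarrow> bool" where
  "packing G i S \<longleftrightarrow> S \<subseteq> verts G \<and>
     (\<forall>u\<in>S. \<forall>v\<in>S. u \<noteq> v \<longrightarrow> \<not> dist_le G i u v)"

definition packing_colorable :: "'a graph \<Rightarrow> nat \<Rightarrow> bool" where
  "packing_colorable G k \<longleftrightarrow> (\<exists>P :: nat \<Rightarrow> 'a set.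
      (\<Union>i\<in>{1..k}. P i) = verts G \<and>
      (\<forall>i\<in>{1..k}. \<forall>j\<in>{1..k}. i \<noteq> j \<longrightarrow> P i \<inter> P j = {}) \<and>
      (\<forall>i\<in>{1..k}. packing G i (P i)))"

definition packing_chromatic_number :: "'a graph \<Rightarrow> nat" where
  "packing_chromatic_number G = (LEAST k. packing_colorable G k)"

definition complete_graph :: "nat \<Rightarrow> nat graph" where
  "complete_graph n = ({0..<n}, {{i, j} | i j. i < n \<and> j < n \<and> i \<noteq> j})"

text \<open>Splitting graph S'(G): original vertices Inl w, new vertices Inr w (= w'),
  with w' joined to every neighbour of w.\<close>
definition splitting_graph :: "'a graph \<Rightarrow> ('a + 'a) graph" where
  "splitting_graph G =
     (Inl ` verts G \<union> Inr ` verts G,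
      (\<lambda>e. Inl ` e) ` edges G \<union>
      {{Inr w, Inl x} | w x. w \<in> verts G \<and> x \<in> verts G \<and> adj G w x})"

text \<open>FSSD_m(G): each edge e = xy replaced by K_{2,m}; the new vertices are Inr (e, j),
  j = 1..m, each adjacent exactly to x and y.\<close>
definition FSSD :: "nat \<Rightarrow> 'a graph \<Rightarrow> ('a + ('a set \<times> nat)) graph" where
  "FSSD m G =
     (Inl ` verts G \<union> {Inr (e, j) | e j. e \<in> edges G \<and> 1 \<le> j \<and> j \<le> m},
      {{Inl x, Inr (e, j)} | x e j. e \<in> edges G \<and> x \<in> e \<and> 1 \<le> j \<and> j \<le> m})"

end

theory Submission
  imports Defs
begin

abbreviation SK :: "nat \<Rightarrow> (nat + nat) graph" where "SK n \<equiv> splitting_graph (complete_graph n)"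
abbreviation GG :: "nat \<Rightarrow> nat \<Rightarrow> ((nat + nat) + ((nat + nat) set \<times> nat)) graph"
  where "GG n m \<equiv> FSSD m (SK n)"
abbreviation uu :: "nat \<Rightarrow> (nat + nat) + ((nat + nat) set \<times> nat)" where "uu i \<equiv> Inl (Inl i)"
abbreviation vv :: "nat \<Rightarrow> (nat + nat) + ((nat + nat) set \<times> nat)" where "vv i \<equiv> Inl (Inr i)"
abbreviation sb :: "nat + nat \<Rightarrow> nat + nat \<Rightarrow> (nat + nat) + ((nat + nat) set \<times> nat)"
  where "sb a b \<equiv> Inr ({a, b}, 1)"

lemma verts_SK: "verts (SK n) = Inl ` {0..<n} \<union> Inr ` {0..<n}"
  by (simp add: verts_def splitting_graph_def complete_graph_def)

lemma e_uu: "i < n \<Longrightarrow> j < n \<Longrightarrow> i \<noteq> j \<Longrightarrow> {Inl i, Inl j} \<in> edges (SK n)"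
proof -
  assume a: "i < n" "j < n" "i \<noteq> j"
  have "{i, j} \<in> {{i, j} |i j. i < n \<and> j < n \<and> i \<noteq> j}" using a by blast
  then have "Inl ` {i, j} \<in> (\<lambda>e. Inl ` e) ` {{i, j} |i j. i < n \<and> j < n \<and> i \<noteq> j}" by blast
  then show ?thesis unfolding edges_def splitting_graph_def complete_graph_def by (simp only: image_insert image_empty snd_conv) blast
qed

lemma e_vu: "i < n \<Longrightarrow> j < n \<Longrightarrow> i \<noteq> j \<Longrightarrow> {Inr i, Inl j} \<in> edges (SK n)"
  unfolding edges_def splitting_graph_def complete_graph_def adj_def verts_def by fastforce

lemma edges_SK_cases:
  assumes "e \<in> edges (SK n)"
  shows "(\<exists>i j. e = {Inl i, Inl j}) \<or> (\<exists>w x. e = {Inr w, Inl x})"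
  using assms unfolding edges_def splitting_graph_def complete_graph_def by auto

lemma edges_SK_sub: "e \<in> edges (SK n) \<Longrightarrow> x \<in> e \<Longrightarrow> x \<in> verts (SK n)"
  unfolding edges_def verts_def splitting_graph_def complete_graph_def by auto

lemma verts_FSSD: "verts (FSSD m H) = Inl ` verts H \<union> {Inr (e, j) | e j. e \<in> edges H \<and> 1 \<le> j \<and> j \<le> m}"
  by (simp add: verts_def FSSD_def)

lemma edges_FSSD: "edges (FSSD m H) = {{Inl x, Inr (e, j)} | x e j. e \<in> edges H \<and> x \<in> e \<and> 1 \<le> j \<and> j \<le> m}"
  by (simp add: edges_def FSSD_def)

lemma adj_FSSD: "e \<in> edges H \<Longrightarrow> x \<in> e \<Longrightarrow> 1 \<le> j \<Longrightarrow> j \<le> m \<Longrightarrow> adj (FSSD m H) (Inl x) (Inr (e, j))"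
  unfolding adj_def edges_FSSD by blast

lemma adj_sym: "adj G a b \<Longrightarrow> adj G b a"
  unfolding adj_def by (auto simp: insert_commute)

lemma adj_FSSD_cases:
  assumes "adj (FSSD m H) a b"
  shows "(\<exists>x e j. a = Inl x \<and> b = Inr (e, j) \<and> x \<in> e \<and> e \<in> edges H) \<or>
         (\<exists>x e j. b = Inl x \<and> a = Inr (e, j) \<and> x \<in> e \<and> e \<in> edges H)"
  using assms unfolding adj_def edges_FSSD by (auto simp: doubleton_eq_iff)

lemma walk_single: "walk G [a] \<longleftrightarrow> a \<in> verts G"
  by (simp add: walk_def)

lemma walk_Cons2: "walk G (a # b # xs) \<longleftrightarrow> a \<in> verts G \<and> adj G a b \<and> walk G (b # xs)"
  unfolding walk_def
  by (auto simp: less_Suc_eq_0_disj)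

lemma dist_mono: "dist_le G k a b \<Longrightarrow> k \<le> l \<Longrightarrow> dist_le G l a b"
  unfolding dist_le_def by force

lemma dist1: "adj G a b \<Longrightarrow> a \<in> verts G \<Longrightarrow> b \<in> verts G \<Longrightarrow> dist_le G 1 a b"
  unfolding dist_le_def by (rule exI[of _ "[a,b]"]) (simp add: walk_Cons2 walk_single)

lemma dist2: "adj G a b \<Longrightarrow> adj G b c \<Longrightarrow> a \<in> verts G \<Longrightarrow> b \<in> verts G \<Longrightarrow> c \<in> verts G \<Longrightarrow> dist_le G 2 a c"
  unfolding dist_le_def by (rule exI[of _ "[a,b,c]"]) (simp add: walk_Cons2 walk_single)

lemma dist3: "adj G a b \<Longrightarrow> adj G b c \<Longrightarrow> adj G c d \<Longrightarrow> a \<in> verts G \<Longrightarrow> b \<in> verts G \<Longrightarrow> c \<in> verts G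
   \<Longrightarrow> d \<in> verts G \<Longrightarrow> dist_le G 3 a d"
  unfolding dist_le_def by (rule exI[of _ "[a,b,c,d]"]) (simp add: walk_Cons2 walk_single)

lemma dist4: "adj G a b \<Longrightarrow> adj G b c \<Longrightarrow> adj G c d \<Longrightarrow> adj G d e \<Longrightarrow> a \<in> verts G \<Longrightarrow> b \<in> verts G \<Longrightarrow> c \<in> verts G
   \<Longrightarrow> d \<in> verts G \<Longrightarrow> e \<in> verts G \<Longrightarrow> dist_le G 4 a e"
  unfolding dist_le_def by (rule exI[of _ "[a,b,c,d,e]"]) (simp add: walk_Cons2 walk_single)

lemma dist_le2_cases:
  assumes "dist_le G k a b" "a \<noteq> b" "k \<le> 2"
  shows "adj G a b \<or> (\<exists>w. adj G a w \<and> adj G w b)"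
proof -
  obtain xs where w: "walk G xs" "hd xs = a" "last xs = b" "length xs \<le> Suc k"
    using assms(1) unfolding dist_le_def by blast
  have "xs \<noteq> []" using w(1) by (simp add: walk_def)
  then show ?thesis
  proof (cases xs)
    case (Cons x ys)
    then show ?thesis
    proof (cases ys)
      case Nil then show ?thesis using Cons w assms by simp
    next
      case (Cons y zs)
      show ?thesis
      proof (cases zs)
        case Nil then show ?thesis using Cons \<open>xs = x # ys\<close> w by (simp add: walk_Cons2)
      next
        case (Cons z ts)
        then have "ts = []" using \<open>ys = y # zs\<close> \<open>xs = x # ys\<close> w(4) assms(3) by (cases ts) auto
        then show ?thesis using Cons \<open>ys = y # zs\<close> \<open>xs = x # ys\<close> w by (auto simp: walk_Cons2)
      qed
    qed
  qed simp
qed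


lemma vert_u: "i < n \<Longrightarrow> uu i \<in> verts (GG n m)"
  by (simp add: verts_FSSD verts_SK)

lemma vert_v: "i < n \<Longrightarrow> vv i \<in> verts (GG n m)"
  by (simp add: verts_FSSD verts_SK)

lemma vert_s: "{a, b} \<in> edges (SK n) \<Longrightarrow> 1 \<le> m \<Longrightarrow> sb a b \<in> verts (GG n m)"
  by (simp add: verts_FSSD)

lemma adj_s1: "{a, b} \<in> edges (SK n) \<Longrightarrow> 1 \<le> m \<Longrightarrow> adj (GG n m) (Inl a) (sb a b)"
  by (rule adj_FSSD) auto

lemma adj_s2: "{a, b} \<in> edges (SK n) \<Longrightarrow> 1 \<le> m \<Longrightarrow> adj (GG n m) (Inl b) (sb a b)"
  by (rule adj_FSSD) auto

lemma D_uu: assumes "i < n" "j < n" "i \<noteq> j" "1 \<le> m" shows "dist_le (GG n m) 2 (uu i) (uu j)"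
proof -
  have e: "{Inl i, Inl j} \<in> edges (SK n)" using assms by (intro e_uu)
  show ?thesis
    by (rule dist2[OF adj_s1[OF e] adj_sym[OF adj_s2[OF e]]])
       (use assms vert_u vert_s[OF e] in auto)
qed

lemma D_vu: assumes "i < n" "j < n" "i \<noteq> j" "1 \<le> m" shows "dist_le (GG n m) 2 (vv i) (uu j)"
proof -
  have e: "{Inr i, Inl j} \<in> edges (SK n)" using assms by (intro e_vu)
  show ?thesis
    by (rule dist2[OF adj_s1[OF e] adj_sym[OF adj_s2[OF e]]])
       (use assms vert_u vert_v vert_s[OF e] in auto)
qed

lemma D_vu4: assumes "i < n" "j < n" "i \<noteq> j" "1 \<le> m" shows "dist_le (GG n m) 4 (vv i) (uu i)"
proof -
  have e: "{Inr i, Inl j} \<in> edges (SK n)" using assms by (intro e_vu)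
  have e2: "{Inl j, Inl i} \<in> edges (SK n)" using assms by (intro e_uu) auto
  show ?thesis
    by (rule dist4[OF adj_s1[OF e] adj_sym[OF adj_s2[OF e]] adj_s1[OF e2] adj_sym[OF adj_s2[OF e2]]])
       (use assms vert_u vert_v vert_s[OF e] vert_s[OF e2] in auto)
qed

lemma D_su3: assumes "i < n" "j < n" "i \<noteq> j" "p < n" "1 \<le> m"
  shows "dist_le (GG n m) 3 (sb (Inr i) (Inl j)) (uu p)"
proof -
  have e: "{Inr i, Inl j} \<in> edges (SK n)" using assms by (intro e_vu)
  show ?thesis
  proof (cases "p = j")
    case True
    have "dist_le (GG n m) 1 (sb (Inr i) (Inl j)) (uu p)"
      unfolding True by (rule dist1[OF adj_sym[OF adj_s2[OF e]]]) (use True assms vert_u vert_s[OF e] in auto)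
    then show ?thesis by (rule dist_mono) simp
  next
    case False
    have e2: "{Inl j, Inl p} \<in> edges (SK n)" using assms False by (intro e_uu) auto
    show ?thesis
      by (rule dist3[OF adj_sym[OF adj_s2[OF e]] adj_s1[OF e2] adj_sym[OF adj_s2[OF e2]]])
         (use assms vert_u vert_s[OF e] vert_s[OF e2] in auto)
  qed
qed

lemma D_ss: "e \<in> edges (SK n) \<Longrightarrow> e' \<in> edges (SK n) \<Longrightarrow> x \<in> e \<Longrightarrow> x \<in> e' \<Longrightarrow> 1 \<le> m \<Longrightarrow>
   dist_le (GG n m) 2 (Inr (e, 1)) (Inr (e', 1))"
  apply (rule dist2[of _ _ "Inl x"])
      apply (rule adj_sym, rule adj_FSSD, auto)[1]
     apply (rule adj_FSSD, auto)[1]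
  apply (auto simp: verts_FSSD dest: edges_SK_sub)
  done


lemma lower:
  assumes n3: "n \<ge> 3" and m1: "1 \<le> m" and pc: "packing_colorable (GG n m) k"
  shows "n + 2 \<le> k"
proof (rule ccontr)
  assume "\<not> n + 2 \<le> k"
  hence kn: "k \<le> n + 1" by simp
  obtain P where cov: "(\<Union>i\<in>{1..k}. P i) = verts (GG n m)"
    and pk: "\<forall>i\<in>{1..k}. packing (GG n m) i (P i)"
    using pc unfolding packing_colorable_def by blast
  define col where "col x = (SOME c. c \<in> {1..k} \<and> x \<in> P c)" for x
  have colP: "col x \<in> {1..k} \<and> x \<in> P (col x)" if "x \<in> verts (GG n m)" for x
  proof -
    from that cov obtain c where "c \<in> {1..k}" "x \<in> P c" by blast
    then show ?thesis unfolding col_def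
      using someI[of "\<lambda>c. c \<in> {1..k} \<and> x \<in> P c" c] by blast
  qed
  have clash: False if "x \<in> verts (GG n m)" "y \<in> verts (GG n m)" "x \<noteq> y" "col x = col y"
    "dist_le (GG n m) d x y" "d \<le> col x" for x y d
  proof -
    have "packing (GG n m) (col x) (P (col x))" using pk colP[OF that(1)] by blast
    moreover have "y \<in> P (col x)" using colP[OF that(2)] that(4) by simp
    moreover have "dist_le (GG n m) (col x) x y" by (rule dist_mono[OF that(5,6)])
    ultimately show False using colP[OF that(1)] that(3) unfolding packing_def by blast
  qed
  show False
  proof (cases "\<exists>i<n. col (uu i) = 1")
    case True
    then obtain i where i: "i < n" "col (uu i) = 1" by blast
    define A where "A = {0..<n} - {i}"
    define N :: "(nat + nat) set" where "N = Inl ` A \<union> Inr ` A"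
    define f :: "nat + nat \<Rightarrow> (nat + nat) + ((nat + nat) set \<times> nat)"
      where "f y = Inr ({y, Inl i}, 1)" for y
    have eN: "{y, Inl i} \<in> edges (SK n)" if "y \<in> N" for y
      using that i(1) unfolding N_def A_def by (auto intro: e_uu e_vu)
    have fv: "f y \<in> verts (GG n m)" if "y \<in> N" for y
      unfolding f_def using vert_s[OF eN[OF that] m1] .
    have fadj: "adj (GG n m) (uu i) (f y)" if "y \<in> N" for y
      unfolding f_def using adj_s2[OF eN[OF that] m1] .
    have fc: "col (f y) \<in> {2..k}" if "y \<in> N" for y
    proof -
      have "col (f y) \<noteq> 1"
      proof
        assume "col (f y) = 1"
        then show False
          using clash[OF vert_u[OF i(1)] fv[OF that] _ _ dist1[OF fadj[OF that] vert_u[OF i(1)] fv[OF that]]] i(2)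
          unfolding f_def by auto
      qed
      then show ?thesis using colP[OF fv[OF that]] by auto
    qed
    have inj: "inj_on (\<lambda>y. col (f y)) N"
    proof (rule inj_onI)
      fix y y' assume y: "y \<in> N" "y' \<in> N" "col (f y) = col (f y')"
      show "y = y'"
      proof (rule ccontr)
        assume ne: "y \<noteq> y'"
        have "y \<noteq> Inl i" "y' \<noteq> Inl i" using y(1,2) unfolding N_def A_def by auto
        hence "f y \<noteq> f y'"
        proof -
          assume h: "y \<noteq> Inl i" "y' \<noteq> Inl i"
          show ?thesis
          proof
            assume "f y = f y'"
            then have "{y, Inl i} = {y', Inl i}" unfolding f_def by simp
            then have "y \<in> {y', Inl i}" by blast
            then show False using h ne by blast
          qed
        qed
        moreover have "dist_le (GG n m) 2 (f y) (f y')"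
          unfolding f_def by (rule D_ss[where x="Inl i", OF eN[OF y(1)] eN[OF y(2)] _ _ m1]) auto
        ultimately show False using clash[OF fv[OF y(1)] fv[OF y(2)]] y(3) fc[OF y(1)] by auto
      qed
    qed
    have "card N \<le> card {2..k}" by (rule card_inj_on_le[OF inj]) (use fc in auto)
    moreover have "card N = 2 * (n - 1)"
    proof -
      have cA: "card A = n - 1" unfolding A_def using i(1) by simp
      have "card N = card (Inl ` A :: (nat+nat) set) + card (Inr ` A :: (nat+nat) set)"
        unfolding N_def by (rule card_Un_disjoint) (auto simp: A_def)
      also have "\<dots> = card A + card A" by (simp add: card_image)
      finally show ?thesis using cA by simp
    qed
    ultimately show False using kn n3 by simp
  next
    case False
    hence uc: "col (uu i) \<in> {2..k}" if "i < n" for i using colP[OF vert_u[OF that]] that by auto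
    have uinj: "col (uu i) \<noteq> col (uu j)" if "i < n" "j < n" "i \<noteq> j" for i j
      using clash[OF vert_u[OF that(1)] vert_u[OF that(2)] _ _ D_uu[OF that m1]] uc[OF that(1)] that(3) by auto
    have inj: "inj_on (\<lambda>i. col (uu i)) {0..<n}"
    proof (rule inj_onI)
      fix x y assume xy: "x \<in> {0..<n}" "y \<in> {0..<n}" "col (uu x) = col (uu y)"
      show "x = y" using uinj[of x y] xy by auto
    qed
    have sub: "(\<lambda>i. col (uu i)) ` {0..<n} \<subseteq> {2..k}" using uc by auto
    have img: "(\<lambda>i. col (uu i)) ` {0..<n} = {2..k}"
    proof (rule card_subset_eq)
      show "finite {2..k}" by simp
      show "(\<lambda>i. col (uu i)) ` {0..<n} \<subseteq> {2..k}" by (rule sub)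
      have "card ((\<lambda>i. col (uu i)) ` {0..<n}) = n" using card_image[OF inj] by simp
      moreover have "card ((\<lambda>i. col (uu i)) ` {0..<n}) \<le> card {2..k}" by (rule card_mono[OF _ sub]) simp
      ultimately show "card ((\<lambda>i. col (uu i)) ` {0..<n}) = card {2..k}" using kn by simp
    qed
    have surj: "\<exists>p<n. col (uu p) = c" if "c \<in> {2..k}" for c
    proof -
      have "c \<in> (\<lambda>i. col (uu i)) ` {0..<n}" using that img by simp
      then show ?thesis by auto
    qed
    have vprop: "col (vv i) = col (uu i) \<and> col (vv i) \<le> 3" if "i < n" "col (vv i) \<noteq> 1" for i
    proof -
      have c: "col (vv i) \<in> {2..k}" using colP[OF vert_v[OF that(1)]] that(2) by auto
      then obtain p where p: "p < n" "col (uu p) = col (vv i)" using surj by blast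
      have pi: "p = i"
      proof (rule ccontr)
        assume "p \<noteq> i"
        then show False using clash[OF vert_v[OF that(1)] vert_u[OF p(1)] _ _ D_vu[OF that(1) p(1) _ m1]] p c by auto
      qed
      define j where "j = (if i = 0 then 1 else (0::nat))"
      have j: "j < n" "i \<noteq> j" unfolding j_def using n3 by auto
      have "col (vv i) \<le> 3"
      proof (rule ccontr)
        assume "\<not> col (vv i) \<le> 3"
        then show False using clash[OF vert_v[OF that(1)] vert_u[OF that(1)] _ _ D_vu4[OF that(1) j m1]] p pi by auto
      qed
      then show ?thesis using p pi by simp
    qed
    obtain i where i: "i < n" "col (vv i) = 1"
    proof -
      have "\<exists>i\<in>{0,1,2::nat}. col (vv i) = 1"
      proof (rule ccontr)
        assume "\<not> ?thesis"
        then have a: "col (vv 0) \<noteq> 1" "col (vv 1) \<noteq> 1" "col (vv 2) \<noteq> 1" by auto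
        have b0: "col (vv 0) = col (uu 0) \<and> col (vv 0) \<le> 3" using vprop[OF _ a(1)] n3 by simp
        have b1: "col (vv 1) = col (uu 1) \<and> col (vv 1) \<le> 3" using vprop[OF _ a(2)] n3 by simp
        have b2: "col (vv 2) = col (uu 2) \<and> col (vv 2) \<le> 3" using vprop[OF _ a(3)] n3 by simp
        have "col (uu 0) \<noteq> col (uu 1)" "col (uu 0) \<noteq> col (uu 2)" "col (uu 1) \<noteq> col (uu 2)"
          using uinj n3 by auto
        moreover have "col (uu 0) \<ge> 2" "col (uu 1) \<ge> 2" "col (uu 2) \<ge> 2" using uc n3 by auto
        ultimately show False using b0 b1 b2 by linarith
      qed
      then obtain i0 where i0: "i0 \<in> {0,1,2::nat}" "col (vv i0) = 1" by blast
      have "i0 < n" using i0(1) n3 by auto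
      then show ?thesis using i0(2) by (rule that)
    qed
    obtain j l where jl: "j < n" "l < n" "j \<noteq> i" "l \<noteq> i" "j \<noteq> l"
    proof (cases "i = 0")
      case True then show ?thesis using that[of 1 2] n3 by auto
    next
      case F: False
      show ?thesis
      proof (cases "i = 1")
        case True then show ?thesis using that[of 0 2] n3 by auto
      next
        case False then show ?thesis using that[of 0 1] n3 F by auto
      qed
    qed
    have s2: "col (sb (Inr i) (Inl j)) = 2" if "j < n" "j \<noteq> i" for j
    proof -
      have e: "{Inr i, Inl j} \<in> edges (SK n)" using that i(1) by (intro e_vu) auto
      have sv: "sb (Inr i) (Inl j) \<in> verts (GG n m)" by (rule vert_s[OF e m1])
      have "col (sb (Inr i) (Inl j)) \<noteq> 1"
        using clash[OF vert_v[OF i(1)] sv _ _ dist1[OF adj_s1[OF e m1] vert_v[OF i(1)] sv]] i(2) by auto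
      hence c: "col (sb (Inr i) (Inl j)) \<in> {2..k}" using colP[OF sv] by auto
      then obtain p where p: "p < n" "col (uu p) = col (sb (Inr i) (Inl j))" using surj by blast
      have "\<not> col (sb (Inr i) (Inl j)) \<ge> 3"
        using clash[OF sv vert_u[OF p(1)] _ _ D_su3[OF i(1) that(1) _ p(1) m1]] p that(2) by auto
      then show ?thesis using c by auto
    qed
    have ej: "{Inr i, Inl j} \<in> edges (SK n)" using jl i(1) by (intro e_vu) auto
    have el: "{Inr i, Inl l} \<in> edges (SK n)" using jl i(1) by (intro e_vu) auto
    show False
      using clash[OF vert_s[OF ej m1] vert_s[OF el m1] _ _ D_ss[where x="Inr i", OF ej el _ _ m1]]
        s2[OF jl(1,3)] s2[OF jl(2,4)] jl by (auto simp: doubleton_eq_iff)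
  qed
qed


lemma dist_le1_adj:
  assumes "dist_le G 1 a b" "a \<noteq> b"
  shows "adj G a b"
proof -
  obtain xs where w: "walk G xs" "hd xs = a" "last xs = b" "length xs \<le> 2"
    using assms(1) unfolding dist_le_def by auto
  have "xs \<noteq> []" using w(1) by (simp add: walk_def)
  then obtain x ys where xs: "xs = x # ys" by (cases xs) auto
  show ?thesis
  proof (cases ys)
    case Nil then show ?thesis using xs w assms by simp
  next
    case (Cons y zs)
    then have "zs = []" using xs w(4) by simp
    then show ?thesis using Cons xs w by (simp add: walk_Cons2)
  qed
qed

lemma edge_Inr: "e \<in> edges (SK n) \<Longrightarrow> Inr a \<in> e \<Longrightarrow> Inr b \<in> e \<Longrightarrow> a = b"
  by (auto dest!: edges_SK_cases)

lemma upper: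
  assumes n3: "n \<ge> 3" and m1: "1 \<le> m"
  shows "packing_colorable (GG n m) (n + 2)"
proof -
  define SUBS :: "((nat + nat) + ((nat + nat) set \<times> nat)) set"
    where "SUBS = {Inr (e, j) | e j. e \<in> edges (SK n) \<and> 1 \<le> j \<and> j \<le> m}"
  define P :: "nat \<Rightarrow> ((nat + nat) + ((nat + nat) set \<times> nat)) set"
    where "P c = (if c = 1 then SUBS else if c = 2 then Inl ` Inr ` {0..<n} else {Inl (Inl (c - 3))})" for c
  have V: "verts (GG n m) = Inl ` (Inl ` {0..<n} \<union> Inr ` {0..<n}) \<union> SUBS"
    unfolding SUBS_def by (simp add: verts_FSSD verts_SK)
  have cov: "(\<Union>i\<in>{1..n+2}. P i) = verts (GG n m)"
  proof
    show "(\<Union>i\<in>{1..n+2}. P i) \<subseteq> verts (GG n m)"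
      unfolding V P_def by auto
    show "verts (GG n m) \<subseteq> (\<Union>i\<in>{1..n+2}. P i)"
    proof
      fix x assume "x \<in> verts (GG n m)"
      then consider (s) "x \<in> SUBS" | (v) i where "i < n" "x = vv i" | (u) i where "i < n" "x = uu i"
        unfolding V by auto
      then show "x \<in> (\<Union>i\<in>{1..n+2}. P i)"
      proof cases
        case s then show ?thesis by (intro UN_I[of 1]) (auto simp: P_def)
      next
        case v then show ?thesis by (intro UN_I[of 2]) (auto simp: P_def)
      next
        case u then show ?thesis by (intro UN_I[of "i + 3"]) (auto simp: P_def)
      qed
    qed
  qed
  have dis: "\<forall>i\<in>{1..n+2}. \<forall>j\<in>{1..n+2}. i \<noteq> j \<longrightarrow> P i \<inter> P j = {}"
    unfolding P_def SUBS_def by auto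
  have pk: "packing (GG n m) c (P c)" if cc: "c \<in> {1..n+2}" for c
  proof -
    have "P c \<subseteq> (\<Union>i\<in>{1..n+2}. P i)" using cc by blast
    then have sub: "P c \<subseteq> verts (GG n m)" using cov by simp
    have "c = 1 \<or> c = 2 \<or> c \<ge> 3" using cc by auto
    then consider "c = 1" | "c = 2" | "c \<ge> 3" by blast
    then show ?thesis
    proof cases
      case 1
      have "\<not> dist_le (GG n m) 1 a b" if "a \<in> SUBS" "b \<in> SUBS" "a \<noteq> b" for a b
      proof
        assume "dist_le (GG n m) 1 a b"
        then have "adj (GG n m) a b" by (rule dist_le1_adj[OF _ that(3)])
        then show False using that(1,2) unfolding SUBS_def by (auto dest!: adj_FSSD_cases)
      qed
      then show ?thesis using sub 1 unfolding packing_def P_def by auto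
    next
      case 2
      have "\<not> dist_le (GG n m) 2 (vv a) (vv b)" if "a \<noteq> b" for a b
      proof
        assume "dist_le (GG n m) 2 (vv a) (vv b)"
        then have "adj (GG n m) (vv a) (vv b) \<or> (\<exists>w. adj (GG n m) (vv a) w \<and> adj (GG n m) w (vv b))"
          by (rule dist_le2_cases) (use that in auto)
        then show False
        proof
          assume "adj (GG n m) (vv a) (vv b)"
          then show False by (auto dest!: adj_FSSD_cases)
        next
          assume "\<exists>w. adj (GG n m) (vv a) w \<and> adj (GG n m) w (vv b)"
          then obtain w where "adj (GG n m) (vv a) w" "adj (GG n m) w (vv b)" by blast
          then obtain e j where "w = Inr (e, j)" "Inr a \<in> e" "Inr b \<in> e" "e \<in> edges (SK n)" by (auto dest!: adj_FSSD_cases)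
          then show False using edge_Inr that by blast
        qed
      qed
      then show ?thesis using sub 2 unfolding packing_def P_def by auto
    next
      case 3
      then show ?thesis using sub unfolding packing_def P_def by auto
    qed
  qed
  show ?thesis unfolding packing_colorable_def
    by (intro exI[of _ P] conjI) (use cov dis pk in auto)
qed

theorem proposition9:
  fixes n m :: nat
  assumes "n \<ge> 3" and "m \<ge> 1"
  shows "packing_chromatic_number (FSSD m (splitting_graph (complete_graph n))) = n + 2"
  unfolding packing_chromatic_number_def
  by (rule Least_equality) (use upper[OF assms] lower[OF assms] in auto)

end
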